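(* Let $\alpha$ be a sequence such that $M(\alpha)$ is a bounded multiplicative Hankel operator on $\ell^2(\mathbb{N})$, and for $0<r<1$ let $\alpha_r=D_r\alpha$. Then $M(\alpha)$ is compact if and only if $\lim_{r\to1}\|M(\alpha_r)-M(\alpha)\|_{\mathcal{B}(\ell^2(\mathbb{N}))}=0$.
   Context: For a sequence $\alpha\colon\mathbb{N}\to\mathbb{C}$, $M(\alpha)$ is defined by $\langle M(\alpha)a,b\rangle_{\ell^2(\mathbb{N})}=\sum_{n,m}a(n)\overline{b(m)}\alpha(nm)$ for finitely supported $a,b$, and is bounded if it extends to a bounded operator on $\ell^2(\mathbb{N})$. Let $p_1<p_2<\dots$ be the primes. For a sequence $a$ and $0<r<1$, $D_ra(n)=r^{\sum_{j\ge1}j\kappa_j}a(n)$ where $n=\prod_{j\ge1}p_j^{\kappa_j}$. *)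

theory Defs
  imports "HOL-Analysis.Analysis" "HOL-Computational_Algebra.Primes"
begin

text \<open>Sequences on \<nat> = {1,2,...} are modelled as functions nat \<Rightarrow> complex;
  the value at index 0 is ignored throughout (all sums range over {1..}).\<close>

definition l2 :: "(nat \<Rightarrow> complex) set" where
  "l2 = {a. (\<lambda>n. (cmod (a n))\<^sup>2) summable_on {1..}}"

definition l2norm :: "(nat \<Rightarrow> complex) \<Rightarrow> real" where
  "l2norm a = sqrt (\<Sum>\<^sub>\<infinity>n\<in>{1..}. (cmod (a n))\<^sup>2)"

definition fin_supp :: "(nat \<Rightarrow> complex) \<Rightarrow> bool" where
  "fin_supp a \<longleftrightarrow> finite {n\<in>{1..}. a n \<noteq> 0}"

definition MH_form :: "(nat \<Rightarrow> complex) \<Rightarrow> (nat \<Rightarrow> complex) \<Rightarrow> (nat \<Rightarrow> complex) \<Rightarrow> complex" where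
  "MH_form \<alpha> a b = (\<Sum>n\<in>{n\<in>{1..}. a n \<noteq> 0}. \<Sum>m\<in>{m\<in>{1..}. b m \<noteq> 0}.
       a n * cnj (b m) * \<alpha> (n * m))"

definition MH_bounded :: "(nat \<Rightarrow> complex) \<Rightarrow> bool" where
  "MH_bounded \<alpha> \<longleftrightarrow> (\<exists>C. \<forall>a b. fin_supp a \<longrightarrow> fin_supp b \<longrightarrow>
       cmod (MH_form \<alpha> a b) \<le> C * l2norm a * l2norm b)"

definition MH :: "(nat \<Rightarrow> complex) \<Rightarrow> (nat \<Rightarrow> complex) \<Rightarrow> (nat \<Rightarrow> complex)" where
  "MH \<alpha> a = (\<lambda>m. \<Sum>\<^sub>\<infinity>n\<in>{1..}. \<alpha> (n * m) * a n)"

definition op_norm :: "((nat \<Rightarrow> complex) \<Rightarrow> (nat \<Rightarrow> complex)) \<Rightarrow> real" where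
  "op_norm T = Sup {l2norm (T a) | a. a \<in> l2 \<and> l2norm a \<le> 1}"

definition compact_op :: "((nat \<Rightarrow> complex) \<Rightarrow> (nat \<Rightarrow> complex)) \<Rightarrow> bool" where
  "compact_op T \<longleftrightarrow> (\<forall>x::nat \<Rightarrow> nat \<Rightarrow> complex. (\<forall>k. x k \<in> l2 \<and> l2norm (x k) \<le> 1) \<longrightarrow>
      (\<exists>s b. strict_mono s \<and> b \<in> l2 \<and> (\<lambda>k. l2norm (T (x (s k)) - b)) \<longlonglongrightarrow> 0))"

text \<open>Index j of a prime p = p_j, i.e. the number of primes \<le> p.\<close>
definition prime_index :: "nat \<Rightarrow> nat" where
  "prime_index p = card {q. prime q \<and> q \<le> p}"

definition weight :: "nat \<Rightarrow> nat" where
  "weight n = (\<Sum>p\<in>prime_factors n. prime_index p * multiplicity p n)"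

definition Dr :: "real \<Rightarrow> (nat \<Rightarrow> complex) \<Rightarrow> (nat \<Rightarrow> complex)" where
  "Dr r a = (\<lambda>n. complex_of_real (r ^ weight n) * a n)"

end

theory Submission imports Defs begin

abbreviation L2f :: "(nat \<Rightarrow> complex) \<Rightarrow> nat set \<Rightarrow> real" where
  "L2f a F \<equiv> L2_set (\<lambda>n. cmod (a n)) F"

lemma L2f_sq: "(L2f a F)^2 = (\<Sum>n\<in>F. (cmod (a n))^2)"
  unfolding L2_set_def by (simp add: sum_nonneg)

lemma l2_bound:
  assumes "\<And>F. finite F \<Longrightarrow> F \<subseteq> {1..} \<Longrightarrow> L2f a F \<le> B"
  shows "a \<in> l2" "l2norm a \<le> B"
proof -
  have B0: "0 \<le> B" using assms[of "{}"] by simp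
  have sb: "(\<Sum>n\<in>F. (cmod (a n))^2) \<le> B^2" if "finite F" "F \<subseteq> {1..}" for F
  proof -
    have "(L2f a F)^2 \<le> B^2" using assms[OF that] by (intro power_mono) auto
    thus ?thesis by (simp add: L2f_sq)
  qed
  have sm: "(\<lambda>n. (cmod (a n))\<^sup>2) summable_on {1..}"
    by (rule nonneg_bdd_above_summable_on) (auto intro!: bdd_aboveI2[where M="B^2"] sb)
  thus "a \<in> l2" by (simp add: l2_def)
  have "(\<Sum>\<^sub>\<infinity>n\<in>{1..}. (cmod (a n))\<^sup>2) \<le> B^2"
    by (rule infsum_le_finite_sums[OF sm]) (use sb in auto)
  hence "l2norm a \<le> sqrt (B^2)" unfolding l2norm_def by (rule real_sqrt_le_mono)
  thus "l2norm a \<le> B" using B0 by simp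
qed

lemma L2f_le_l2norm:
  assumes "a \<in> l2" "finite F" "F \<subseteq> {1..}"
  shows "L2f a F \<le> l2norm a"
proof -
  have "(\<Sum>n\<in>F. (cmod (a n))^2) \<le> (\<Sum>\<^sub>\<infinity>n\<in>{1..}. (cmod (a n))\<^sup>2)"
    by (rule finite_sum_le_infsum) (use assms in \<open>auto simp: l2_def\<close>)
  thus ?thesis unfolding L2_set_def l2norm_def by (rule real_sqrt_le_mono)
qed

lemma l2norm_nonneg: "0 \<le> l2norm a"
  unfolding l2norm_def by (simp add: infsum_nonneg)

lemma l2norm_cong: "(\<And>n. n \<ge> 1 \<Longrightarrow> a n = b n) \<Longrightarrow> l2norm a = l2norm b"
  unfolding l2norm_def by (intro arg_cong[where f=sqrt] infsum_cong) auto

lemma l2_cong: "(\<And>n. n \<ge> 1 \<Longrightarrow> a n = b n) \<Longrightarrow> a \<in> l2 \<Longrightarrow> b \<in> l2"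
  unfolding l2_def by (auto intro: summable_on_cong[THEN iffD1, rotated])

lemma coord_le_l2norm:
  assumes "a \<in> l2" "1 \<le> m" shows "cmod (a m) \<le> l2norm a"
proof -
  have "L2f a {m} \<le> l2norm a" using assms by (intro L2f_le_l2norm) auto
  thus ?thesis by simp
qed

lemma l2_zero: "(\<lambda>n. 0) \<in> l2" "l2norm (\<lambda>n. 0) = 0"
proof -
  have *: "\<And>F. finite F \<Longrightarrow> F \<subseteq> {1..} \<Longrightarrow> L2f (\<lambda>n. 0) F \<le> 0" by (simp add: L2_set_0')
  show "(\<lambda>n. 0) \<in> l2" by (rule l2_bound(1)[OF *])
  show "l2norm (\<lambda>n. 0) = 0" using l2_bound(2)[OF *] l2norm_nonneg[of "\<lambda>n. 0"] by linarith
qed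

lemma l2_add:
  assumes "a \<in> l2" "b \<in> l2"
  shows "(\<lambda>n. a n + b n) \<in> l2" "l2norm (\<lambda>n. a n + b n) \<le> l2norm a + l2norm b"
proof -
  have "L2f (\<lambda>n. a n + b n) F \<le> l2norm a + l2norm b" if "finite F" "F \<subseteq> {1..}" for F
  proof -
    have "L2f (\<lambda>n. a n + b n) F \<le> L2_set (\<lambda>n. cmod (a n) + cmod (b n)) F"
      by (rule L2_set_mono) (auto intro: norm_triangle_ineq)
    also have "\<dots> \<le> L2f a F + L2f b F" by (rule L2_set_triangle_ineq)
    also have "\<dots> \<le> l2norm a + l2norm b" using assms that by (intro add_mono L2f_le_l2norm)
    finally show ?thesis .
  qed
  note * = this
  show "(\<lambda>n. a n + b n) \<in> l2" by (rule l2_bound(1)[OF *])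
  show "l2norm (\<lambda>n. a n + b n) \<le> l2norm a + l2norm b" by (rule l2_bound(2)[OF *])
qed

lemma l2_diff:
  assumes "a \<in> l2" "b \<in> l2"
  shows "(\<lambda>n. a n - b n) \<in> l2" "l2norm (\<lambda>n. a n - b n) \<le> l2norm a + l2norm b"
proof -
  have "L2f (\<lambda>n. a n - b n) F \<le> l2norm a + l2norm b" if "finite F" "F \<subseteq> {1..}" for F
  proof -
    have "L2f (\<lambda>n. a n - b n) F \<le> L2_set (\<lambda>n. cmod (a n) + cmod (b n)) F"
      by (rule L2_set_mono) (auto intro: norm_triangle_ineq4)
    also have "\<dots> \<le> L2f a F + L2f b F" by (rule L2_set_triangle_ineq)
    also have "\<dots> \<le> l2norm a + l2norm b" using assms that by (intro add_mono L2f_le_l2norm)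
    finally show ?thesis .
  qed
  note * = this
  show "(\<lambda>n. a n - b n) \<in> l2" by (rule l2_bound(1)[OF *])
  show "l2norm (\<lambda>n. a n - b n) \<le> l2norm a + l2norm b" by (rule l2_bound(2)[OF *])
qed

lemma l2_dom:
  assumes "a \<in> l2" "\<And>n. n \<ge> 1 \<Longrightarrow> cmod (b n) \<le> c * cmod (a n)" "0 \<le> c"
  shows "b \<in> l2" "l2norm b \<le> c * l2norm a"
proof -
  have "L2f b F \<le> c * l2norm a" if "finite F" "F \<subseteq> {1..}" for F
  proof -
    have "L2f b F \<le> L2_set (\<lambda>n. c * cmod (a n)) F"
      by (rule L2_set_mono) (use assms that in auto)
    also have "\<dots> = c * L2f a F" using assms(3) by (simp add: L2_set_right_distrib)
    also have "\<dots> \<le> c * l2norm a" using assms that by (intro mult_left_mono L2f_le_l2norm)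
    finally show ?thesis .
  qed
  note * = this
  show "b \<in> l2" by (rule l2_bound(1)[OF *])
  show "l2norm b \<le> c * l2norm a" by (rule l2_bound(2)[OF *])
qed

lemma l2norm_scale:
  "l2norm (\<lambda>n. of_real c * a n) = \<bar>c\<bar> * l2norm a"
proof -
  have e: "\<And>n. (cmod (of_real c * a n))\<^sup>2 = c^2 * (cmod (a n))\<^sup>2"
    by (simp add: norm_mult power_mult_distrib)
  have "(\<Sum>\<^sub>\<infinity>n\<in>{1..}. (cmod (of_real c * a n))\<^sup>2) = (\<Sum>\<^sub>\<infinity>n\<in>{1..}. c^2 * (cmod (a n))\<^sup>2)"
    by (simp only: e)
  also have "\<dots> = c^2 * (\<Sum>\<^sub>\<infinity>n\<in>{1..}. (cmod (a n))\<^sup>2)"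
    by (rule infsum_cmult_right')
  finally have "l2norm (\<lambda>n. of_real c * a n) = sqrt (c^2 * (\<Sum>\<^sub>\<infinity>n\<in>{1..}. (cmod (a n))\<^sup>2))"
    unfolding l2norm_def by simp
  also have "\<dots> = \<bar>c\<bar> * l2norm a" unfolding l2norm_def by (simp add: real_sqrt_mult)
  finally show ?thesis .
qed

lemma weight_sup:
  assumes "finite U" "prime_factors n \<subseteq> U" "\<And>p. p \<in> U \<Longrightarrow> prime p" "n \<noteq> 0"
  shows "weight n = (\<Sum>p\<in>U. prime_index p * multiplicity p n)"
  unfolding weight_def
proof (rule sum.mono_neutral_left[OF assms(1,2)])
  show "\<forall>p\<in>U - prime_factors n. prime_index p * multiplicity p n = 0"
  proof
    fix p assume p: "p \<in> U - prime_factors n"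
    hence "\<not> p dvd n" using assms(3,4) by (auto simp: in_prime_factors_iff)
    thus "prime_index p * multiplicity p n = 0" by (simp add: not_dvd_imp_multiplicity_0)
  qed
qed

lemma weight_mult:
  assumes "n \<noteq> 0" "m \<noteq> 0"
  shows "weight (n * m) = weight n + weight m"
proof -
  let ?U = "prime_factors n \<union> prime_factors m"
  have U: "finite ?U" "\<And>p. p \<in> ?U \<Longrightarrow> prime p" by auto
  have "weight (n * m) = (\<Sum>p\<in>?U. prime_index p * multiplicity p (n * m))"
    using assms by (intro weight_sup U) (auto simp: prime_factors_product)
  also have "\<dots> = (\<Sum>p\<in>?U. prime_index p * multiplicity p n + prime_index p * multiplicity p m)"
  proof (rule sum.cong[OF refl])
    fix p assume "p \<in> ?U"
    hence "prime_elem p" using U(2) by auto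
    thus "prime_index p * multiplicity p (n * m) = prime_index p * multiplicity p n + prime_index p * multiplicity p m"
      using assms by (simp add: prime_elem_multiplicity_mult_distrib distrib_left)
  qed
  also have "\<dots> = weight n + weight m"
  proof -
    have "weight n = (\<Sum>p\<in>?U. prime_index p * multiplicity p n)"
      using assms by (intro weight_sup U) auto
    moreover have "weight m = (\<Sum>p\<in>?U. prime_index p * multiplicity p m)"
      using assms by (intro weight_sup U) auto
    ultimately show ?thesis by (simp add: sum.distrib)
  qed
  finally show ?thesis .
qed

lemma prime_index_pos: "prime p \<Longrightarrow> prime_index p \<ge> 1"
proof -
  assume "prime p"
  hence "p \<in> {q. prime q \<and> q \<le> p}" by simp
  moreover have "finite {q. prime q \<and> q \<le> p}" by simp
  ultimately have "card {q. prime q \<and> q \<le> p} > 0" by (metis card_gt_0_iff empty_iff)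
  thus ?thesis unfolding prime_index_def by simp
qed

lemma prime_index_less: "prime p \<Longrightarrow> prime q \<Longrightarrow> p < q \<Longrightarrow> prime_index p < prime_index q"
  unfolding prime_index_def
proof -
  assume pq: "prime p" "prime q" "p < q"
  have "q \<in> {r. prime r \<and> r \<le> q} - {r. prime r \<and> r \<le> p}" using pq by auto
  moreover have "{r. prime r \<and> r \<le> p} \<subseteq> {r. prime r \<and> r \<le> q}" using pq by auto
  ultimately have "{r. prime r \<and> r \<le> p} \<subset> {r. prime r \<and> r \<le> q}" by blast
  moreover have "finite {r. prime r \<and> r \<le> q}" by simp
  ultimately show "card {r. prime r \<and> r \<le> p} < card {r. prime r \<and> r \<le> q}" by (rule psubset_card_mono[rotated])
qed

lemma prime_index_inj: "inj_on prime_index {p. prime p}"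
proof (rule inj_onI)
  fix p q assume "p \<in> {p. prime p}" "q \<in> {p. prime p}" "prime_index p = prime_index q"
  thus "p = q" using prime_index_less[of p q] prime_index_less[of q p]
    by (metis linorder_neqE_nat mem_Collect_eq order_less_irrefl)
qed

lemma weight_finite: "finite {n. n \<ge> 1 \<and> weight n \<le> K}"
proof -
  define Q where "Q = prime_index -` {..K} \<inter> {p. prime p}"
  have Qf: "finite Q" unfolding Q_def by (rule finite_vimage_IntI[OF _ prime_index_inj]) simp
  define g where "g f = (\<Prod>p\<in>Q. p ^ f p)" for f :: "nat \<Rightarrow> nat"
  have "{n. n \<ge> 1 \<and> weight n \<le> K} \<subseteq> g ` (Q \<rightarrow>\<^sub>E {..K})"
  proof
    fix n assume "n \<in> {n. n \<ge> 1 \<and> weight n \<le> K}"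
    hence n: "n \<ge> 1" "weight n \<le> K" by auto
    have key: "prime_index p \<le> K \<and> multiplicity p n \<le> K" if p: "p \<in> prime_factors n" for p
    proof -
      have pp: "prime p" using p by auto
      have "prime_index p * multiplicity p n \<le> weight n"
        unfolding weight_def by (rule member_le_sum) (use p in auto)
      moreover have "multiplicity p n \<ge> 1"
        using p n pp prime_multiplicity_gt_zero_iff[of p n] by (auto simp: in_prime_factors_iff)
      moreover have "prime_index p \<ge> 1" using prime_index_pos[OF pp] .
      ultimately have "prime_index p \<le> weight n" "multiplicity p n \<le> weight n"
        by (metis le_trans mult_le_mono mult_1_right mult_1 order_refl)+
      thus ?thesis using n(2) by linarith
    qed
    have sub: "prime_factors n \<subseteq> Q" unfolding Q_def using key by auto
    have m0: "multiplicity p n = 0" if "p \<in> Q - prime_factors n" for p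
    proof -
      have "prime p" using that unfolding Q_def by auto
      hence "\<not> p dvd n" using that n(1) by (auto simp: in_prime_factors_iff)
      thus ?thesis by (simp add: not_dvd_imp_multiplicity_0)
    qed
    have "n = (\<Prod>p\<in>prime_factors n. p ^ multiplicity p n)"
      using n(1) by (intro prime_factorization_nat) simp
    also have "\<dots> = (\<Prod>p\<in>Q. p ^ multiplicity p n)"
      by (rule prod.mono_neutral_left[OF Qf sub]) (simp add: m0)
    also have "\<dots> = g (restrict (\<lambda>p. multiplicity p n) Q)"
      unfolding g_def by (rule prod.cong) auto
    finally have "n = g (restrict (\<lambda>p. multiplicity p n) Q)" .
    moreover have "restrict (\<lambda>p. multiplicity p n) Q \<in> Q \<rightarrow>\<^sub>E {..K}"
    proof -
      have "multiplicity p n \<le> K" if "p \<in> Q" for p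
        using key[of p] m0[of p] that by (cases "p \<in> prime_factors n") auto
      thus ?thesis by auto
    qed
    ultimately show "n \<in> g ` (Q \<rightarrow>\<^sub>E {..K})" by blast
  qed
  moreover have "finite (g ` (Q \<rightarrow>\<^sub>E {..K}))" using Qf by (intro finite_imageI finite_PiE) auto
  ultimately show ?thesis by (rule finite_subset)
qed

lemma Dr_le: "0 \<le> r \<Longrightarrow> r \<le> 1 \<Longrightarrow> cmod (Dr r a n) \<le> cmod (a n)"
proof -
  assume r: "0 \<le> r" "r \<le> 1"
  have "r ^ weight n \<le> 1" using r by (simp add: power_le_one)
  moreover have "0 \<le> r ^ weight n" using r by simp
  moreover have "cmod (Dr r a n) = r ^ weight n * cmod (a n)"
    unfolding Dr_def norm_mult norm_of_real using r by simp
  ultimately show ?thesis by (simp add: mult_left_le_one_le)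
qed

lemma Dr_diff_le: "0 \<le> r \<Longrightarrow> r \<le> 1 \<Longrightarrow> cmod (Dr r a n - a n) \<le> cmod (a n)"
proof -
  assume r: "0 \<le> r" "r \<le> 1"
  have "r ^ weight n \<le> 1" using r by (simp add: power_le_one)
  moreover have "0 \<le> r ^ weight n" using r by simp
  ultimately have "\<bar>r ^ weight n - 1\<bar> \<le> 1" by simp
  moreover have "Dr r a n - a n = of_real (r ^ weight n - 1) * a n"
    unfolding Dr_def by (simp add: algebra_simps)
  ultimately have "cmod (Dr r a n - a n) = \<bar>r ^ weight n - 1\<bar> * cmod (a n)"
    by (simp only: norm_mult norm_of_real)
  thus ?thesis using \<open>\<bar>r ^ weight n - 1\<bar> \<le> 1\<close> by (simp add: mult_left_le_one_le)
qed

lemma Dr_l2: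
  assumes "a \<in> l2" "0 \<le> r" "r \<le> 1"
  shows "Dr r a \<in> l2" "l2norm (Dr r a) \<le> l2norm a"
  using l2_dom[OF assms(1), of "Dr r a" 1] Dr_le[OF assms(2,3)] by auto

lemma Dr_diff_l2:
  assumes "a \<in> l2" "0 \<le> r" "r \<le> 1"
  shows "(\<lambda>n. Dr r a n - a n) \<in> l2" "l2norm (\<lambda>n. Dr r a n - a n) \<le> l2norm a"
  using l2_dom[OF assms(1), of "\<lambda>n. Dr r a n - a n" 1] Dr_diff_le[OF assms(2,3)] by auto

lemma fin_supp_sub:
  "finite G \<Longrightarrow> (\<And>n. n \<ge> 1 \<Longrightarrow> a n \<noteq> 0 \<Longrightarrow> n \<in> G) \<Longrightarrow> fin_supp a"
  unfolding fin_supp_def by (rule finite_subset[of _ G]) auto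

lemma form_eq:
  assumes "finite G" "finite F"
    "\<And>n. n \<ge> 1 \<Longrightarrow> a n \<noteq> 0 \<Longrightarrow> n \<in> G" "\<And>m. m \<ge> 1 \<Longrightarrow> b m \<noteq> 0 \<Longrightarrow> m \<in> F"
    "G \<subseteq> {1..}" "F \<subseteq> {1..}"
  shows "MH_form \<alpha> a b = (\<Sum>n\<in>G. \<Sum>m\<in>F. a n * cnj (b m) * \<alpha> (n * m))"
proof -
  have inner: "(\<Sum>m\<in>{m\<in>{1..}. b m \<noteq> 0}. a n * cnj (b m) * \<alpha> (n * m)) =
      (\<Sum>m\<in>F. a n * cnj (b m) * \<alpha> (n * m))" for n
    by (rule sum.mono_neutral_left[OF assms(2)]) (use assms(4,6) in auto)
  have "MH_form \<alpha> a b = (\<Sum>n\<in>{n\<in>{1..}. a n \<noteq> 0}. \<Sum>m\<in>F. a n * cnj (b m) * \<alpha> (n * m))"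
    unfolding MH_form_def inner ..
  also have "\<dots> = (\<Sum>n\<in>G. \<Sum>m\<in>F. a n * cnj (b m) * \<alpha> (n * m))"
    by (rule sum.mono_neutral_left[OF assms(1)]) (use assms(3,5) in auto)
  finally show ?thesis .
qed

lemma infsum_norm_le:
  fixes f :: "nat \<Rightarrow> complex"
  assumes "f summable_on A" "\<And>H. finite H \<Longrightarrow> H \<subseteq> A \<Longrightarrow> norm (sum f H) \<le> B"
  shows "norm (infsum f A) \<le> B"
proof -
  have "((\<lambda>H. norm (sum f H)) \<longlongrightarrow> norm (infsum f A)) (finite_subsets_at_top A)"
    by (intro tendsto_norm infsum_tendsto assms(1))
  moreover have "eventually (\<lambda>H. norm (sum f H) \<le> B) (finite_subsets_at_top A)"
    using assms(2) by (rule eventually_finite_subsets_at_top_weakI)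
  ultimately show ?thesis by (rule tendsto_upperbound) simp
qed

lemma L2_set_subset: "finite B \<Longrightarrow> A \<subseteq> B \<Longrightarrow> L2_set f A \<le> L2_set f B"
  unfolding L2_set_def by (intro real_sqrt_le_mono sum_mono2) auto

lemma L2_set_vanish:
  assumes "finite F" "\<And>n. n \<in> F \<Longrightarrow> n \<notin> G \<Longrightarrow> f n = 0"
  shows "L2_set f F = L2_set f (F \<inter> G)"
  unfolding L2_set_def
  by (rule arg_cong[where f=sqrt], rule sum.mono_neutral_right) (use assms in auto)

lemma trunc_l2:
  assumes "finite G"
  shows "(\<lambda>n. if n \<in> G then x n else 0) \<in> l2" "l2norm (\<lambda>n. if n \<in> G then x n else 0) \<le> L2f x G"
proof -
  have *: "L2f (\<lambda>n. if n \<in> G then x n else 0) F \<le> L2f x G" if "finite F" "F \<subseteq> {1..}" for F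
  proof -
    have "L2f (\<lambda>n. if n \<in> G then x n else 0) F = L2f (\<lambda>n. if n \<in> G then x n else 0) (F \<inter> G)"
      by (rule L2_set_vanish) (use that in auto)
    also have "\<dots> = L2f x (F \<inter> G)" by (rule L2_set_cong) auto
    also have "\<dots> \<le> L2f x G" by (rule L2_set_subset) (use assms in auto)
    finally show ?thesis .
  qed
  show "(\<lambda>n. if n \<in> G then x n else 0) \<in> l2" by (rule l2_bound(1)[OF *])
  show "l2norm (\<lambda>n. if n \<in> G then x n else 0) \<le> L2f x G" by (rule l2_bound(2)[OF *])
qed

lemma l2_tail:
  assumes "a \<in> l2" "\<epsilon> > 0"
  shows "\<exists>G. finite G \<and> G \<subseteq> {1..} \<and> (\<forall>H. finite H \<longrightarrow> H \<subseteq> {1..} \<longrightarrow> H \<inter> G = {} \<longrightarrow> L2f a H \<le> \<epsilon>)"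
proof -
  let ?f = "\<lambda>n. (cmod (a n))\<^sup>2"
  have sm: "?f summable_on {1..}" using assms(1) by (simp add: l2_def)
  obtain G where G: "finite G" "G \<subseteq> {1..}" "dist (sum ?f G) (infsum ?f {1..}) \<le> \<epsilon>^2"
    using infsum_finite_approximation[OF sm, of "\<epsilon>^2"] assms(2) by auto
  have "L2f a H \<le> \<epsilon>" if H: "finite H" "H \<subseteq> {1..}" "H \<inter> G = {}" for H
  proof -
    have "sum ?f (G \<union> H) \<le> infsum ?f {1..}"
      by (rule finite_sum_le_infsum[OF sm]) (use G H in auto)
    moreover have "sum ?f (G \<union> H) = sum ?f G + sum ?f H"
      by (rule sum.union_disjoint) (use G H in auto)
    ultimately have "sum ?f H \<le> \<epsilon>^2" using G(3) by (simp add: dist_real_def)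
    hence "L2f a H \<le> sqrt (\<epsilon>^2)" unfolding L2_set_def by (rule real_sqrt_le_mono)
    thus ?thesis using assms(2) by simp
  qed
  thus ?thesis using G by blast
qed

lemma sq_le_imp_le: "(S::real) \<ge> 0 \<Longrightarrow> K \<ge> 0 \<Longrightarrow> S^2 \<le> K * S \<Longrightarrow> S \<le> K"
  by (cases "S = 0") (auto simp: power2_eq_square)

lemma cnj_mult_self_sum: "(\<Sum>m\<in>F. cnj (y m) * y m) = of_real (\<Sum>m\<in>F. (cmod (y m))^2)"
proof -
  have "(\<Sum>m\<in>F. cnj (y m) * y m) = (\<Sum>m\<in>F. of_real ((cmod (y m))^2))"
    by (rule sum.cong) (simp, metis complex_norm_square mult.commute)
  thus ?thesis by simp
qed

locale mh =
  fixes \<alpha> :: "nat \<Rightarrow> complex" and C :: real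
  assumes C0: "0 \<le> C"
    and bnd: "\<And>a b. fin_supp a \<Longrightarrow> fin_supp b \<Longrightarrow> cmod (MH_form \<alpha> a b) \<le> C * l2norm a * l2norm b"
begin

lemma col:
  assumes m: "m \<ge> 1"
  shows "(\<lambda>n. \<alpha> (n * m)) \<in> l2" "l2norm (\<lambda>n. \<alpha> (n * m)) \<le> C"
proof -
  have *: "L2f (\<lambda>n. \<alpha> (n * m)) G \<le> C" if G: "finite G" "G \<subseteq> {1..}" for G
  proof -
    define S where "S = L2f (\<lambda>n. \<alpha> (n * m)) G"
    define a where "a = (\<lambda>n. if n \<in> G then cnj (\<alpha> (n * m)) else 0)"
    define b where "b = (\<lambda>n::nat. if n \<in> {m} then (1::complex) else 0)"
    have fa: "fin_supp a" unfolding a_def by (rule fin_supp_sub[OF G(1)]) (auto split: if_splits)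
    have fb: "fin_supp b" unfolding b_def by (rule fin_supp_sub[of "{m}"]) (auto split: if_splits)
    have "MH_form \<alpha> a b = (\<Sum>n\<in>G. \<Sum>m'\<in>{m}. a n * cnj (b m') * \<alpha> (n * m'))"
      by (rule form_eq) (use G m in \<open>auto simp: a_def b_def split: if_splits\<close>)
    also have "\<dots> = (\<Sum>n\<in>G. cnj (\<alpha> (n * m)) * \<alpha> (n * m))"
      by (rule sum.cong) (auto simp: a_def b_def)
    also have "\<dots> = of_real (S^2)" unfolding S_def L2f_sq by (rule cnj_mult_self_sum)
    finally have e: "MH_form \<alpha> a b = of_real (S^2)" .
    have na: "l2norm a \<le> S"
    proof -
      have "l2norm a \<le> L2f (\<lambda>n. cnj (\<alpha> (n * m))) G" unfolding a_def by (rule trunc_l2(2)[OF G(1)])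
      thus ?thesis unfolding S_def by simp
    qed
    have nb: "l2norm b \<le> 1"
    proof -
      have "l2norm b \<le> L2f (\<lambda>n. 1) {m}" unfolding b_def by (rule trunc_l2(2)) simp
      thus ?thesis by simp
    qed
    have S0: "0 \<le> S" unfolding S_def by simp
    have "S^2 \<le> C * l2norm a * l2norm b" using bnd[OF fa fb] e by (simp add: norm_power)
    also have "\<dots> = C * (l2norm a * l2norm b)" by (simp only: mult.assoc)
    also have "\<dots> \<le> C * (S * 1)"
    proof (rule mult_left_mono[OF _ C0])
      show "l2norm a * l2norm b \<le> S * 1"
        by (rule mult_mono[OF na nb S0 l2norm_nonneg])
    qed
    finally have "S^2 \<le> C * S" by simp
    hence "S \<le> C" by (rule sq_le_imp_le[OF S0 C0])
    thus ?thesis unfolding S_def .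
  qed
  show "(\<lambda>n. \<alpha> (n * m)) \<in> l2" by (rule l2_bound(1)[OF *])
  show "l2norm (\<lambda>n. \<alpha> (n * m)) \<le> C" by (rule l2_bound(2)[OF *])
qed

lemma row_sum_bound:
  assumes x: "x \<in> l2" and m: "m \<ge> 1" and H: "finite H" "H \<subseteq> {1..}"
  shows "(\<Sum>n\<in>H. cmod (\<alpha> (n * m) * x n)) \<le> C * l2norm x"
proof -
  have "(\<Sum>n\<in>H. cmod (\<alpha> (n * m) * x n)) = (\<Sum>n\<in>H. \<bar>cmod (\<alpha> (n * m))\<bar> * \<bar>cmod (x n)\<bar>)"
    by (simp add: norm_mult)
  also have "\<dots> \<le> L2f (\<lambda>n. \<alpha> (n * m)) H * L2f x H" by (rule L2_set_mult_ineq)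
  also have "\<dots> \<le> C * l2norm x"
    using L2f_le_l2norm[OF col(1)[OF m] H] col(2)[OF m] L2f_le_l2norm[OF x H] C0
    by (intro mult_mono) auto
  finally show ?thesis .
qed

lemma row_summable:
  assumes x: "x \<in> l2" and m: "m \<ge> 1"
  shows "(\<lambda>n. \<alpha> (n * m) * x n) summable_on {1..}"
proof (rule abs_summable_summable)
  show "(\<lambda>n. norm (\<alpha> (n * m) * x n)) summable_on {1..}"
    unfolding abs_summable_iff_bdd_above
    by (rule bdd_aboveI2[where M="C * l2norm x"]) (use row_sum_bound[OF x m] in auto)
qed

lemma coord_bound:
  assumes x: "x \<in> l2" and m: "m \<ge> 1"
  shows "cmod (MH \<alpha> x m) \<le> C * l2norm x"
  unfolding MH_def
proof (rule infsum_norm_le[OF row_summable[OF x m]])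
  fix H :: "nat set" assume H: "finite H" "H \<subseteq> {1..}"
  have "cmod (\<Sum>n\<in>H. \<alpha> (n * m) * x n) \<le> (\<Sum>n\<in>H. cmod (\<alpha> (n * m) * x n))" by (rule norm_sum)
  also have "\<dots> \<le> C * l2norm x" by (rule row_sum_bound[OF x m H])
  finally show "cmod (\<Sum>n\<in>H. \<alpha> (n * m) * x n) \<le> C * l2norm x" .
qed

end

lemma L2f_split:
  assumes "finite H" "L2f f (H \<inter> G) \<le> A" "L2f f (H - G) \<le> B"
  shows "L2f f H \<le> A + B"
proof -
  have A0: "0 \<le> A" using assms(2) L2_set_nonneg[of "\<lambda>n. cmod (f n)" "H \<inter> G"] by linarith
  have B0: "0 \<le> B" using assms(3) L2_set_nonneg[of "\<lambda>n. cmod (f n)" "H - G"] by linarith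
  have "(L2f f H)^2 = (L2f f (H \<inter> G))^2 + (L2f f (H - G))^2"
    unfolding L2f_sq using assms(1) by (rule sum.Int_Diff)
  also have "\<dots> \<le> A^2 + B^2"
    by (rule add_mono; rule power_mono) (use assms(2,3) in simp_all)
  also have "\<dots> \<le> (A + B)^2" using A0 B0 by (simp add: power2_sum)
  finally have "(L2f f H)^2 \<le> (A + B)^2" .
  thus ?thesis by (rule power2_le_imp_le) (use A0 B0 in linarith)
qed

lemma Dr_null:
  fixes z :: "nat \<Rightarrow> nat \<Rightarrow> complex"
  assumes r: "0 \<le> r" "r < 1" and z: "\<And>k. z k \<in> l2" "\<And>k. l2norm (z k) \<le> B"
    and pw: "\<And>n. n \<ge> 1 \<Longrightarrow> (\<lambda>k. z k n) \<longlonglongrightarrow> 0"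
  shows "(\<lambda>k. l2norm (Dr r (z k))) \<longlonglongrightarrow> 0"
proof (rule tendsto_iff[THEN iffD2], intro allI impI)
  fix \<epsilon> :: real assume e: "\<epsilon> > 0"
  have B0: "0 \<le> B" using z(2)[of 0] l2norm_nonneg order_trans by blast
  define \<eta> where "\<eta> = \<epsilon> / (2 * (B + 1))"
  have eta: "\<eta> > 0" unfolding \<eta>_def using e B0 by simp
  have "(\<lambda>K. r ^ K) \<longlonglongrightarrow> 0" using r by (intro LIMSEQ_power_zero) simp
  hence "eventually (\<lambda>K. r ^ K < \<eta>) sequentially" using eta by (rule order_tendstoD)
  then obtain K where K: "r ^ K < \<eta>" unfolding eventually_sequentially by blast
  define G where "G = {n. n \<ge> 1 \<and> weight n \<le> K}"
  have Gf: "finite G" unfolding G_def by (rule weight_finite)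
  have bound: "l2norm (Dr r (z k)) \<le> L2f (z k) G + \<eta> * B" for k
  proof (rule l2_bound(2))
    fix H :: "nat set" assume H: "finite H" "H \<subseteq> {1..}"
    show "L2f (Dr r (z k)) H \<le> L2f (z k) G + \<eta> * B"
    proof (rule L2f_split[OF H(1)])
      have "L2f (Dr r (z k)) (H \<inter> G) \<le> L2f (z k) (H \<inter> G)"
        by (rule L2_set_mono) (simp_all add: Dr_le r less_imp_le)
      also have "\<dots> \<le> L2f (z k) G" by (rule L2_set_subset[OF Gf]) auto
      finally show "L2f (Dr r (z k)) (H \<inter> G) \<le> L2f (z k) G" .
      have "L2f (Dr r (z k)) (H - G) \<le> L2_set (\<lambda>n. \<eta> * cmod (z k n)) (H - G)"
      proof (rule L2_set_mono)
        fix n assume n: "n \<in> H - G"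
        hence "weight n > K" using H unfolding G_def by auto
        hence "r ^ weight n \<le> r ^ K" using r by (intro power_decreasing) auto
        hence "r ^ weight n \<le> \<eta>" using K by simp
        moreover have "cmod (Dr r (z k) n) = r ^ weight n * cmod (z k n)"
          unfolding Dr_def norm_mult norm_of_real using r by simp
        ultimately show "cmod (Dr r (z k) n) \<le> \<eta> * cmod (z k n)"
          by (simp add: mult_right_mono)
      qed simp
      also have "\<dots> = \<eta> * L2f (z k) (H - G)" using eta by (simp add: L2_set_right_distrib)
      also have "\<dots> \<le> \<eta> * B"
      proof (rule mult_left_mono)
        have "H - G \<subseteq> {1..}" using H by auto
        hence "L2f (z k) (H - G) \<le> l2norm (z k)" using H(1) by (intro L2f_le_l2norm[OF z(1)]) auto
        thus "L2f (z k) (H - G) \<le> B" using z(2)[of k] by linarith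
      qed (use eta in simp)
      finally show "L2f (Dr r (z k)) (H - G) \<le> \<eta> * B" .
    qed
  qed
  have "(\<lambda>k. L2f (z k) G) \<longlonglongrightarrow> sqrt (\<Sum>n\<in>G. (cmod 0)^2)"
    unfolding L2_set_def
  proof (rule tendsto_real_sqrt, rule tendsto_sum)
    fix n assume "n \<in> G"
    hence "n \<ge> 1" unfolding G_def by simp
    thus "(\<lambda>k. (cmod (z k n))^2) \<longlonglongrightarrow> (cmod 0)^2" by (intro tendsto_power tendsto_norm pw)
  qed
  hence "(\<lambda>k. L2f (z k) G) \<longlonglongrightarrow> 0" by simp
  hence "eventually (\<lambda>k. L2f (z k) G < \<epsilon> / 2) sequentially"
    using e by (intro order_tendstoD) auto
  thus "eventually (\<lambda>k. dist (l2norm (Dr r (z k))) 0 < \<epsilon>) sequentially"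
  proof eventually_elim
    case (elim k)
    have "\<eta> * B \<le> \<epsilon> / 2"
    proof -
      have "\<eta> * B = \<epsilon> / 2 * (B / (B + 1))" unfolding \<eta>_def using B0 by (simp add: field_simps)
      also have "\<dots> \<le> \<epsilon> / 2 * 1" using B0 e by (intro mult_left_mono) auto
      finally show ?thesis by simp
    qed
    hence "l2norm (Dr r (z k)) < \<epsilon>" using bound[of k] elim by linarith
    thus ?case using l2norm_nonneg[of "Dr r (z k)"] by (simp add: dist_real_def)
  qed
qed

lemma Dr_conv:
  assumes v: "v \<in> l2" and rho: "\<And>k. 0 \<le> \<rho> k" "\<And>k. \<rho> k \<le> 1" "\<rho> \<longlonglongrightarrow> 1"
  shows "(\<lambda>k. l2norm (\<lambda>n. Dr (\<rho> k) v n - v n)) \<longlonglongrightarrow> 0"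
proof (rule tendsto_iff[THEN iffD2], intro allI impI)
  fix \<epsilon> :: real assume e: "\<epsilon> > 0"
  obtain G where G: "finite G" "G \<subseteq> {1..}"
      "\<And>H. finite H \<Longrightarrow> H \<subseteq> {1..} \<Longrightarrow> H \<inter> G = {} \<Longrightarrow> L2f v H \<le> \<epsilon> / 3"
    using l2_tail[OF v, of "\<epsilon> / 3"] e by auto
  have bound: "l2norm (\<lambda>n. Dr (\<rho> k) v n - v n) \<le> L2f (\<lambda>n. Dr (\<rho> k) v n - v n) G + \<epsilon> / 3" for k
  proof (rule l2_bound(2))
    fix H :: "nat set" assume H: "finite H" "H \<subseteq> {1..}"
    show "L2f (\<lambda>n. Dr (\<rho> k) v n - v n) H \<le> L2f (\<lambda>n. Dr (\<rho> k) v n - v n) G + \<epsilon> / 3"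
    proof (rule L2f_split[OF H(1)])
      show "L2f (\<lambda>n. Dr (\<rho> k) v n - v n) (H \<inter> G) \<le> L2f (\<lambda>n. Dr (\<rho> k) v n - v n) G"
        by (rule L2_set_subset[OF G(1)]) auto
      have "L2f (\<lambda>n. Dr (\<rho> k) v n - v n) (H - G) \<le> L2f v (H - G)"
        by (rule L2_set_mono) (simp_all add: Dr_diff_le rho)
      also have "\<dots> \<le> \<epsilon> / 3" by (rule G(3)) (use H in auto)
      finally show "L2f (\<lambda>n. Dr (\<rho> k) v n - v n) (H - G) \<le> \<epsilon> / 3" .
    qed
  qed
  have "(\<lambda>k. L2f (\<lambda>n. Dr (\<rho> k) v n - v n) G) \<longlonglongrightarrow>
        sqrt (\<Sum>n\<in>G. (cmod (complex_of_real (1 ^ weight n) * v n - v n))^2)"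
    unfolding L2_set_def Dr_def
    by (intro tendsto_real_sqrt tendsto_sum tendsto_power tendsto_norm tendsto_diff tendsto_mult tendsto_of_real tendsto_const rho(3))
  hence "(\<lambda>k. L2f (\<lambda>n. Dr (\<rho> k) v n - v n) G) \<longlonglongrightarrow> 0" by simp
  hence "eventually (\<lambda>k. L2f (\<lambda>n. Dr (\<rho> k) v n - v n) G < \<epsilon> / 3) sequentially"
    using e by (intro order_tendstoD) auto
  thus "eventually (\<lambda>k. dist (l2norm (\<lambda>n. Dr (\<rho> k) v n - v n)) 0 < \<epsilon>) sequentially"
  proof eventually_elim
    case (elim k)
    hence "l2norm (\<lambda>n. Dr (\<rho> k) v n - v n) < \<epsilon>" using bound[of k] e by linarith
    thus ?case using l2norm_nonneg[of "\<lambda>n. Dr (\<rho> k) v n - v n"] by (simp add: dist_real_def)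
  qed
qed

context mh
begin

lemma MH_l2:
  assumes x: "x \<in> l2"
  shows "MH \<alpha> x \<in> l2" "l2norm (MH \<alpha> x) \<le> C * l2norm x"
proof -
  define y where "y G m = (\<Sum>n\<in>G. \<alpha> (n * m) * x n)" for G m
  have yb: "L2f (y G) F \<le> C * l2norm x" if G: "finite G" "G \<subseteq> {1..}" and F: "finite F" "F \<subseteq> {1..}" for G F
  proof -
    define S where "S = L2f (y G) F"
    have S0: "0 \<le> S" unfolding S_def by simp
    define a where "a = (\<lambda>n. if n \<in> G then x n else 0)"
    define b where "b = (\<lambda>n. if n \<in> F then y G n else 0)"
    have fa: "fin_supp a" unfolding a_def by (rule fin_supp_sub[OF G(1)]) (auto split: if_splits)
    have fb: "fin_supp b" unfolding b_def by (rule fin_supp_sub[OF F(1)]) (auto split: if_splits)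
    have "MH_form \<alpha> a b = (\<Sum>n\<in>G. \<Sum>m\<in>F. a n * cnj (b m) * \<alpha> (n * m))"
      by (rule form_eq[OF G(1) F(1) _ _ G(2) F(2)]) (auto simp: a_def b_def split: if_splits)
    also have "\<dots> = (\<Sum>n\<in>G. \<Sum>m\<in>F. x n * cnj (y G m) * \<alpha> (n * m))"
      by (intro sum.cong refl) (simp add: a_def b_def)
    also have "\<dots> = (\<Sum>m\<in>F. \<Sum>n\<in>G. x n * cnj (y G m) * \<alpha> (n * m))"
      by (rule sum.swap)
    also have "\<dots> = (\<Sum>m\<in>F. cnj (y G m) * y G m)"
    proof (rule sum.cong[OF refl])
      fix m
      have "cnj (y G m) * y G m = (\<Sum>n\<in>G. cnj (y G m) * (\<alpha> (n * m) * x n))"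
        unfolding y_def[of G m] by (rule sum_distrib_left)
      also have "\<dots> = (\<Sum>n\<in>G. x n * cnj (y G m) * \<alpha> (n * m))"
        by (rule sum.cong) (simp_all add: mult_ac)
      finally show "(\<Sum>n\<in>G. x n * cnj (y G m) * \<alpha> (n * m)) = cnj (y G m) * y G m" by simp
    qed
    also have "\<dots> = of_real (S^2)" unfolding S_def L2f_sq by (rule cnj_mult_self_sum)
    finally have e: "MH_form \<alpha> a b = of_real (S^2)" .
    have na: "l2norm a \<le> l2norm x"
    proof -
      have "l2norm a \<le> L2f x G" unfolding a_def by (rule trunc_l2(2)[OF G(1)])
      also have "\<dots> \<le> l2norm x" by (rule L2f_le_l2norm[OF x G])
      finally show ?thesis .
    qed
    have nb: "l2norm b \<le> S" unfolding b_def S_def by (rule trunc_l2(2)[OF F(1)])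
    have "S^2 \<le> C * l2norm a * l2norm b" using bnd[OF fa fb] e by (simp add: norm_power)
    also have "\<dots> = C * (l2norm a * l2norm b)" by (simp only: mult.assoc)
    also have "\<dots> \<le> C * (l2norm x * S)"
    proof (rule mult_left_mono[OF _ C0])
      show "l2norm a * l2norm b \<le> l2norm x * S"
        by (rule mult_mono[OF na nb l2norm_nonneg l2norm_nonneg])
    qed
    finally have "S^2 \<le> (C * l2norm x) * S" by (simp only: mult.assoc)
    hence "S \<le> C * l2norm x" by (rule sq_le_imp_le[OF S0 mult_nonneg_nonneg[OF C0 l2norm_nonneg]])
    thus ?thesis unfolding S_def .
  qed
  have *: "L2f (MH \<alpha> x) F \<le> C * l2norm x" if F: "finite F" "F \<subseteq> {1..}" for F
  proof -
    have lim: "((\<lambda>G. L2f (y G) F) \<longlongrightarrow> L2f (MH \<alpha> x) F) (finite_subsets_at_top {1..})"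
      unfolding L2_set_def
    proof (rule tendsto_real_sqrt, rule tendsto_sum)
      fix m assume "m \<in> F"
      hence m: "m \<ge> 1" using F by auto
      have "((\<lambda>G. y G m) \<longlongrightarrow> MH \<alpha> x m) (finite_subsets_at_top {1..})"
        unfolding y_def MH_def by (rule infsum_tendsto[OF row_summable[OF x m]])
      thus "((\<lambda>G. (cmod (y G m))^2) \<longlongrightarrow> (cmod (MH \<alpha> x m))^2) (finite_subsets_at_top {1..})"
        by (intro tendsto_power tendsto_norm)
    qed
    moreover have "eventually (\<lambda>G. L2f (y G) F \<le> C * l2norm x) (finite_subsets_at_top {1..})"
      by (rule eventually_finite_subsets_at_top_weakI) (rule yb[OF _ _ F])
    ultimately show ?thesis by (rule tendsto_upperbound) simp
  qed
  show "MH \<alpha> x \<in> l2" by (rule l2_bound(1)[OF *])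
  show "l2norm (MH \<alpha> x) \<le> C * l2norm x" by (rule l2_bound(2)[OF *])
qed

lemma MH_diff:
  assumes x: "x \<in> l2" and y: "y \<in> l2" and m: "m \<ge> 1"
  shows "MH \<alpha> (\<lambda>n. x n - y n) m = MH \<alpha> x m - MH \<alpha> y m"
proof -
  have "MH \<alpha> (\<lambda>n. x n - y n) m = (\<Sum>\<^sub>\<infinity>n\<in>{1..}. \<alpha> (n * m) * x n + - (\<alpha> (n * m) * y n))"
    unfolding MH_def by (intro infsum_cong) (simp add: algebra_simps)
  also have "\<dots> = MH \<alpha> x m + (\<Sum>\<^sub>\<infinity>n\<in>{1..}. - (\<alpha> (n * m) * y n))"
    unfolding MH_def
    by (rule infsum_add[OF row_summable[OF x m] summable_on_uminus[THEN iffD2, OF row_summable[OF y m]]])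
  also have "\<dots> = MH \<alpha> x m - MH \<alpha> y m" unfolding MH_def infsum_uminus by simp
  finally show ?thesis .
qed

lemma MH_scale:
  "MH \<alpha> (\<lambda>n. c * x n) m = c * MH \<alpha> x m"
proof -
  have "MH \<alpha> (\<lambda>n. c * x n) m = (\<Sum>\<^sub>\<infinity>n\<in>{1..}. c * (\<alpha> (n * m) * x n))"
    unfolding MH_def by (intro infsum_cong) (simp add: mult_ac)
  also have "\<dots> = c * MH \<alpha> x m" unfolding MH_def by (rule infsum_cmult_right')
  finally show ?thesis .
qed

lemma coord_null:
  fixes z :: "nat \<Rightarrow> nat \<Rightarrow> complex"
  assumes z: "\<And>k. z k \<in> l2" "\<And>k. l2norm (z k) \<le> B"
    and pw: "\<And>n. n \<ge> 1 \<Longrightarrow> (\<lambda>k. z k n) \<longlonglongrightarrow> 0" and m: "m \<ge> 1"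
  shows "(\<lambda>k. MH \<alpha> (z k) m) \<longlonglongrightarrow> 0"
proof (rule tendsto_iff[THEN iffD2], intro allI impI)
  fix \<epsilon> :: real assume e: "\<epsilon> > 0"
  have B0: "0 \<le> B" using z(2)[of 0] l2norm_nonneg[of "z 0"] by linarith
  define \<eta> where "\<eta> = \<epsilon> / (2 * (B + 1))"
  have eta: "\<eta> > 0" unfolding \<eta>_def using e B0 by simp
  obtain G where G: "finite G" "G \<subseteq> {1..}"
      "\<And>H. finite H \<Longrightarrow> H \<subseteq> {1..} \<Longrightarrow> H \<inter> G = {} \<Longrightarrow> L2f (\<lambda>n. \<alpha> (n * m)) H \<le> \<eta>"
    using l2_tail[OF col(1)[OF m] eta] by blast
  have bound: "cmod (MH \<alpha> (z k) m) \<le> (\<Sum>n\<in>G. cmod (\<alpha> (n * m) * z k n)) + \<eta> * B" for k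
    unfolding MH_def
  proof (rule infsum_norm_le[OF row_summable[OF z(1) m]])
    fix H :: "nat set" assume H: "finite H" "H \<subseteq> {1..}"
    have "cmod (\<Sum>n\<in>H. \<alpha> (n * m) * z k n) \<le> (\<Sum>n\<in>H. cmod (\<alpha> (n * m) * z k n))" by (rule norm_sum)
    also have "\<dots> = (\<Sum>n\<in>H \<inter> G. cmod (\<alpha> (n * m) * z k n)) + (\<Sum>n\<in>H - G. cmod (\<alpha> (n * m) * z k n))"
      using H(1) by (rule sum.Int_Diff)
    also have "\<dots> \<le> (\<Sum>n\<in>G. cmod (\<alpha> (n * m) * z k n)) + \<eta> * B"
    proof (rule add_mono)
      show "(\<Sum>n\<in>H \<inter> G. cmod (\<alpha> (n * m) * z k n)) \<le> (\<Sum>n\<in>G. cmod (\<alpha> (n * m) * z k n))"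
        by (rule sum_mono2[OF G(1)]) auto
      have HG: "finite (H - G)" "H - G \<subseteq> {1..}" "(H - G) \<inter> G = {}" using H by auto
      have "(\<Sum>n\<in>H - G. cmod (\<alpha> (n * m) * z k n)) = (\<Sum>n\<in>H - G. \<bar>cmod (\<alpha> (n * m))\<bar> * \<bar>cmod (z k n)\<bar>)"
        by (simp add: norm_mult)
      also have "\<dots> \<le> L2f (\<lambda>n. \<alpha> (n * m)) (H - G) * L2f (z k) (H - G)" by (rule L2_set_mult_ineq)
      also have "\<dots> \<le> \<eta> * B"
      proof (rule mult_mono)
        show "L2f (\<lambda>n. \<alpha> (n * m)) (H - G) \<le> \<eta>" by (rule G(3)[OF HG])
        have "L2f (z k) (H - G) \<le> l2norm (z k)" by (rule L2f_le_l2norm[OF z(1) HG(1,2)])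
        thus "L2f (z k) (H - G) \<le> B" using z(2)[of k] by linarith
      qed (use eta in simp_all)
      finally show "(\<Sum>n\<in>H - G. cmod (\<alpha> (n * m) * z k n)) \<le> \<eta> * B" .
    qed
    finally show "cmod (\<Sum>n\<in>H. \<alpha> (n * m) * z k n) \<le> (\<Sum>n\<in>G. cmod (\<alpha> (n * m) * z k n)) + \<eta> * B" .
  qed
  have "(\<lambda>k. \<Sum>n\<in>G. cmod (\<alpha> (n * m) * z k n)) \<longlonglongrightarrow> (\<Sum>n\<in>G. cmod (\<alpha> (n * m) * 0))"
  proof (rule tendsto_sum)
    fix n assume "n \<in> G"
    hence "n \<ge> 1" using G(2) by auto
    thus "(\<lambda>k. cmod (\<alpha> (n * m) * z k n)) \<longlonglongrightarrow> cmod (\<alpha> (n * m) * 0)"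
      by (intro tendsto_norm tendsto_mult tendsto_const pw)
  qed
  hence "(\<lambda>k. \<Sum>n\<in>G. cmod (\<alpha> (n * m) * z k n)) \<longlonglongrightarrow> 0" by simp
  hence "eventually (\<lambda>k. (\<Sum>n\<in>G. cmod (\<alpha> (n * m) * z k n)) < \<epsilon> / 2) sequentially"
    using e by (intro order_tendstoD) auto
  thus "eventually (\<lambda>k. dist (MH \<alpha> (z k) m) 0 < \<epsilon>) sequentially"
  proof eventually_elim
    case (elim k)
    have "\<eta> * B \<le> \<epsilon> / 2"
    proof -
      have "\<eta> * B = \<epsilon> / 2 * (B / (B + 1))" unfolding \<eta>_def using B0 by (simp add: field_simps)
      also have "\<dots> \<le> \<epsilon> / 2 * 1" using B0 e by (intro mult_left_mono) auto
      finally show ?thesis by simp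
    qed
    hence "cmod (MH \<alpha> (z k) m) < \<epsilon>" using bound[of k] elim by linarith
    thus ?case by (simp add: dist_norm)
  qed
qed

end

lemma tendsto0_by_contra:
  fixes f :: "nat \<Rightarrow> real"
  assumes contra: "\<And>\<epsilon> (s :: nat \<Rightarrow> nat). \<epsilon> > 0 \<Longrightarrow> strict_mono s \<Longrightarrow> (\<And>j. \<epsilon> \<le> f (s j)) \<Longrightarrow> False"
    and nn: "\<And>k. 0 \<le> f k"
  shows "f \<longlonglongrightarrow> 0"
proof (rule tendsto_iff[THEN iffD2], intro allI impI)
  fix \<epsilon> :: real assume e: "\<epsilon> > 0"
  show "eventually (\<lambda>k. dist (f k) 0 < \<epsilon>) sequentially"
  proof (rule ccontr)
    assume "\<not> eventually (\<lambda>k. dist (f k) 0 < \<epsilon>) sequentially"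
    hence "infinite {k. \<not> dist (f k) 0 < \<epsilon>}"
      unfolding cofinite_eq_sequentially[symmetric] eventually_cofinite by simp
    then obtain s :: "nat \<Rightarrow> nat" where s: "strict_mono s" "\<And>j. s j \<in> {k. \<not> dist (f k) 0 < \<epsilon>}"
      using infinite_enumerate by blast
    have "\<epsilon> \<le> f (s j)" for j using s(2)[of j] nn[of "s j"] by (simp add: dist_real_def)
    thus False using contra[OF e s(1)] by blast
  qed
qed

lemma pw_compact:
  fixes x :: "nat \<Rightarrow> nat \<Rightarrow> complex"
  assumes "\<And>k n. cmod (x k n) \<le> 1"
  shows "\<exists>s l. strict_mono s \<and> (\<forall>n. (\<lambda>k. x (s k) n) \<longlonglongrightarrow> l n)"
proof -
  let ?S = "PiE UNIV (\<lambda>_::nat. cball (0::complex) 1)"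
  have "compactin (product_topology (\<lambda>_. euclidean) UNIV) ?S"
    by (simp add: compactin_PiE)
  hence "compact ?S" by (simp add: euclidean_product_topology compactin_euclidean_iff)
  hence "seq_compact ?S" by (rule compact_imp_seq_compact)
  moreover have "\<And>k. x k \<in> ?S" using assms by auto
  ultimately obtain l s where "strict_mono s" "(x \<circ> s) \<longlonglongrightarrow> l"
    unfolding seq_compact_def by metis
  moreover have "\<And>n. (\<lambda>k. x (s k) n) \<longlonglongrightarrow> l n"
  proof -
    fix n
    have "continuous_on UNIV (\<lambda>f::nat\<Rightarrow>complex. f n)" by simp
    thus "(\<lambda>k. x (s k) n) \<longlonglongrightarrow> l n"
      using \<open>(x \<circ> s) \<longlonglongrightarrow> l\<close> continuous_on_tendsto_compose[of UNIV "\<lambda>f::nat\<Rightarrow>complex. f n" "x \<circ> s" l sequentially]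
      by (simp add: o_def)
  qed
  ultimately show ?thesis by blast
qed

lemma weak_limit:
  fixes x :: "nat \<Rightarrow> nat \<Rightarrow> complex"
  assumes x: "\<And>k. x k \<in> l2" "\<And>k. l2norm (x k) \<le> 1"
  shows "\<exists>s l. strict_mono s \<and> l \<in> l2 \<and> l2norm l \<le> 1 \<and> (\<forall>n\<ge>1. (\<lambda>k. x (s k) n) \<longlonglongrightarrow> l n)"
proof -
  define x' where "x' k n = (if n = 0 then 0 else x k n)" for k n
  have "cmod (x' k n) \<le> 1" for k n
  proof (cases "n = 0")
    case False
    hence "cmod (x k n) \<le> l2norm (x k)" by (intro coord_le_l2norm x) simp
    thus ?thesis using x(2)[of k] False unfolding x'_def by simp
  qed (simp add: x'_def)
  then obtain s l where s: "strict_mono s" "\<And>n. (\<lambda>k. x' (s k) n) \<longlonglongrightarrow> l n"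
    using pw_compact[of x'] by blast
  have pw: "(\<lambda>k. x (s k) n) \<longlonglongrightarrow> l n" if "n \<ge> 1" for n
    using s(2)[of n] that unfolding x'_def by simp
  have *: "L2f l F \<le> 1" if F: "finite F" "F \<subseteq> {1..}" for F
  proof -
    have "(\<lambda>k. L2f (x (s k)) F) \<longlonglongrightarrow> L2f l F"
      unfolding L2_set_def
    proof (rule tendsto_real_sqrt, rule tendsto_sum)
      fix n assume "n \<in> F"
      hence "n \<ge> 1" using F by auto
      thus "(\<lambda>k. (cmod (x (s k) n))^2) \<longlonglongrightarrow> (cmod (l n))^2" by (intro tendsto_power tendsto_norm pw)
    qed
    moreover have "eventually (\<lambda>k. L2f (x (s k)) F \<le> 1) sequentially"
    proof (rule always_eventually, rule allI)
      fix k
      have "L2f (x (s k)) F \<le> l2norm (x (s k))" by (rule L2f_le_l2norm[OF x(1) F])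
      thus "L2f (x (s k)) F \<le> 1" using x(2)[of "s k"] by linarith
    qed
    ultimately show ?thesis by (rule tendsto_upperbound) simp
  qed
  have "l \<in> l2" by (rule l2_bound(1)[OF *])
  moreover have "l2norm l \<le> 1" by (rule l2_bound(2)[OF *])
  ultimately
  show ?thesis using s(1) pw by blast
qed

lemma opset_mem:
  "a \<in> l2 \<Longrightarrow> l2norm a \<le> 1 \<Longrightarrow> l2norm (T a) \<in> {l2norm (T a) |a. a \<in> l2 \<and> l2norm a \<le> 1}"
  by blast

lemma opset_ne: "{l2norm (T a) |a. a \<in> l2 \<and> l2norm a \<le> 1} \<noteq> {}"
proof -
  have "l2norm (T (\<lambda>n. 0)) \<in> {l2norm (T a) |a. a \<in> l2 \<and> l2norm a \<le> 1}"
    by (rule opset_mem[OF l2_zero(1)]) (simp add: l2_zero(2))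
  thus ?thesis by (metis empty_iff)
qed

lemma opn_le:
  assumes "\<And>a. a \<in> l2 \<Longrightarrow> l2norm a \<le> 1 \<Longrightarrow> l2norm (T a) \<le> E"
  shows "op_norm T \<le> E"
  unfolding op_norm_def
proof (rule cSup_least)
  show "{l2norm (T a) |a. a \<in> l2 \<and> l2norm a \<le> 1} \<noteq> {}" by (rule opset_ne)
  fix y assume "y \<in> {l2norm (T a) |a. a \<in> l2 \<and> l2norm a \<le> 1}"
  then obtain a where "y = l2norm (T a)" "a \<in> l2" "l2norm a \<le> 1" by blast
  thus "y \<le> E" using assms by simp
qed

lemma opn_ge:
  assumes "\<And>a. a \<in> l2 \<Longrightarrow> l2norm a \<le> 1 \<Longrightarrow> l2norm (T a) \<le> E" "a \<in> l2" "l2norm a \<le> 1"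
  shows "l2norm (T a) \<le> op_norm T"
  unfolding op_norm_def
proof (rule cSup_upper)
  show "l2norm (T a) \<in> {l2norm (T a) |a. a \<in> l2 \<and> l2norm a \<le> 1}" by (rule opset_mem[OF assms(2,3)])
  show "bdd_above {l2norm (T a) |a. a \<in> l2 \<and> l2norm a \<le> 1}"
  proof (rule bdd_aboveI)
    fix y assume "y \<in> {l2norm (T a) |a. a \<in> l2 \<and> l2norm a \<le> 1}"
    then obtain a where "y = l2norm (T a)" "a \<in> l2" "l2norm a \<le> 1" by blast
    thus "y \<le> E" using assms(1) by simp
  qed
qed

lemma opn_nonneg:
  assumes "\<And>a. a \<in> l2 \<Longrightarrow> l2norm a \<le> 1 \<Longrightarrow> l2norm (T a) \<le> E"
  shows "0 \<le> op_norm T"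
proof -
  have z: "l2norm (\<lambda>n::nat. 0::complex) \<le> 1" using l2_zero(2) by simp
  have "l2norm (T (\<lambda>n. 0)) \<le> op_norm T" by (rule opn_ge[OF assms l2_zero(1) z])
  thus ?thesis using l2norm_nonneg[of "T (\<lambda>n. 0)"] by linarith
qed

lemma opn_gt:
  assumes "t < op_norm T"
  shows "\<exists>a. a \<in> l2 \<and> l2norm a \<le> 1 \<and> t < l2norm (T a)"
proof -
  have "{l2norm (T a) |a. a \<in> l2 \<and> l2norm a \<le> 1} \<noteq> {}" by (rule opset_ne)
  from less_cSupD[OF this] assms obtain y where "y \<in> {l2norm (T a) |a. a \<in> l2 \<and> l2norm a \<le> 1}" "t < y"
    unfolding op_norm_def by blast
  thus ?thesis by blast
qed

lemma MH_scale_gen: "MH \<beta> (\<lambda>n. c * x n) m = c * MH \<beta> x m"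
proof -
  have "MH \<beta> (\<lambda>n. c * x n) m = (\<Sum>\<^sub>\<infinity>n\<in>{1..}. c * (\<beta> (n * m) * x n))"
    unfolding MH_def by (intro infsum_cong) (simp add: mult_ac)
  also have "\<dots> = c * MH \<beta> x m" unfolding MH_def by (rule infsum_cmult_right')
  finally show ?thesis .
qed

lemma MH_Dr:
  assumes m: "m \<ge> 1"
  shows "MH (Dr r \<beta>) a m = Dr r (MH \<beta> (Dr r a)) m"
proof -
  have "MH (Dr r \<beta>) a m = (\<Sum>\<^sub>\<infinity>n\<in>{1..}. of_real (r ^ weight m) * (\<beta> (n * m) * Dr r a n))"
    unfolding MH_def
  proof (rule infsum_cong)
    fix n :: nat assume "n \<in> {1..}"
    hence "weight (n * m) = weight n + weight m" using m by (intro weight_mult) auto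
    hence "r ^ weight (n * m) = r ^ weight m * r ^ weight n" by (simp add: power_add mult.commute)
    thus "Dr r \<beta> (n * m) * a n = of_real (r ^ weight m) * (\<beta> (n * m) * Dr r a n)"
      unfolding Dr_def by (simp add: mult_ac)
  qed
  also have "\<dots> = Dr r (MH \<beta> (Dr r a)) m"
    unfolding Dr_def MH_def by (rule infsum_cmult_right')
  finally show ?thesis .
qed

context mh
begin

lemma DMD_l2:
  assumes a: "a \<in> l2" and r: "0 \<le> r" "r \<le> 1"
  shows "Dr r (MH \<alpha> (Dr r a)) \<in> l2" "l2norm (Dr r (MH \<alpha> (Dr r a))) \<le> C * l2norm a"
proof -
  have d: "Dr r a \<in> l2" "l2norm (Dr r a) \<le> l2norm a" using Dr_l2[OF a r] by auto
  have m: "MH \<alpha> (Dr r a) \<in> l2" "l2norm (MH \<alpha> (Dr r a)) \<le> C * l2norm (Dr r a)"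
    using MH_l2[OF d(1)] by auto
  show "Dr r (MH \<alpha> (Dr r a)) \<in> l2" using Dr_l2(1)[OF m(1) r] .
  have "l2norm (Dr r (MH \<alpha> (Dr r a))) \<le> l2norm (MH \<alpha> (Dr r a))" using Dr_l2(2)[OF m(1) r] .
  also have "\<dots> \<le> C * l2norm (Dr r a)" by (rule m(2))
  also have "\<dots> \<le> C * l2norm a" by (rule mult_left_mono[OF d(2) C0])
  finally show "l2norm (Dr r (MH \<alpha> (Dr r a))) \<le> C * l2norm a" .
qed

lemma Tr_eq: "m \<ge> 1 \<Longrightarrow> (MH (Dr r \<alpha>) a - MH \<alpha> a) m = Dr r (MH \<alpha> (Dr r a)) m - MH \<alpha> a m"
  by (simp add: MH_Dr)

lemma Tr_l2:
  assumes a: "a \<in> l2" and r: "0 \<le> r" "r \<le> 1"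
  shows "(MH (Dr r \<alpha>) a - MH \<alpha> a) \<in> l2" "l2norm (MH (Dr r \<alpha>) a - MH \<alpha> a) \<le> 2 * C * l2norm a"
proof -
  have u: "Dr r (MH \<alpha> (Dr r a)) \<in> l2" "l2norm (Dr r (MH \<alpha> (Dr r a))) \<le> C * l2norm a"
    using DMD_l2[OF a r] by auto
  have v: "MH \<alpha> a \<in> l2" "l2norm (MH \<alpha> a) \<le> C * l2norm a" using MH_l2[OF a] by auto
  have w: "(\<lambda>n. Dr r (MH \<alpha> (Dr r a)) n - MH \<alpha> a n) \<in> l2"
    "l2norm (\<lambda>n. Dr r (MH \<alpha> (Dr r a)) n - MH \<alpha> a n) \<le> l2norm (Dr r (MH \<alpha> (Dr r a))) + l2norm (MH \<alpha> a)"
    using l2_diff[OF u(1) v(1)] by auto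
  show "(MH (Dr r \<alpha>) a - MH \<alpha> a) \<in> l2" by (rule l2_cong[OF _ w(1)]) (simp add: MH_Dr)
  have "l2norm (MH (Dr r \<alpha>) a - MH \<alpha> a) = l2norm (\<lambda>n. Dr r (MH \<alpha> (Dr r a)) n - MH \<alpha> a n)"
    by (rule l2norm_cong) (simp add: MH_Dr)
  also have "\<dots> \<le> 2 * C * l2norm a" using w(2) u(2) v(2) by linarith
  finally show "l2norm (MH (Dr r \<alpha>) a - MH \<alpha> a) \<le> 2 * C * l2norm a" .
qed

lemma Tr_bound1:
  assumes r: "0 \<le> r" "r \<le> 1"
  shows "\<And>a. a \<in> l2 \<Longrightarrow> l2norm a \<le> 1 \<Longrightarrow> l2norm (MH (Dr r \<alpha>) a - MH \<alpha> a) \<le> 2 * C"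
proof -
  fix a assume a: "a \<in> l2" "l2norm a \<le> 1"
  have "l2norm (MH (Dr r \<alpha>) a - MH \<alpha> a) \<le> 2 * C * l2norm a" using Tr_l2(2)[OF a(1) r] .
  also have "\<dots> \<le> 2 * C * 1" using a(2) C0 by (intro mult_left_mono) auto
  finally show "l2norm (MH (Dr r \<alpha>) a - MH \<alpha> a) \<le> 2 * C" by simp
qed

lemma compact_null1:
  fixes z :: "nat \<Rightarrow> nat \<Rightarrow> complex"
  assumes cpt: "compact_op (MH \<alpha>)"
    and z: "\<And>k. z k \<in> l2" "\<And>k. l2norm (z k) \<le> 1"
    and pw: "\<And>n. n \<ge> 1 \<Longrightarrow> (\<lambda>k. z k n) \<longlonglongrightarrow> 0"
  shows "(\<lambda>k. l2norm (MH \<alpha> (z k))) \<longlonglongrightarrow> 0"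
proof (rule tendsto0_by_contra[OF _ l2norm_nonneg])
  fix \<epsilon> :: real and s :: "nat \<Rightarrow> nat"
  assume e: "\<epsilon> > 0" and s: "strict_mono s" and ge: "\<And>j. \<epsilon> \<le> l2norm (MH \<alpha> (z (s j)))"
  have hz: "\<forall>k. (\<lambda>k. z (s k)) k \<in> l2 \<and> l2norm ((\<lambda>k. z (s k)) k) \<le> 1" using z by auto
  have "\<exists>s2 b. strict_mono s2 \<and> b \<in> l2 \<and> (\<lambda>k. l2norm (MH \<alpha> ((\<lambda>k. z (s k)) (s2 k)) - b)) \<longlonglongrightarrow> 0"
  proof -
    have A: "\<forall>x::nat \<Rightarrow> nat \<Rightarrow> complex. (\<forall>k. x k \<in> l2 \<and> l2norm (x k) \<le> 1) \<longrightarrow>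
      (\<exists>s b. strict_mono s \<and> b \<in> l2 \<and> (\<lambda>k. l2norm (MH \<alpha> (x (s k)) - b)) \<longlonglongrightarrow> 0)"
      using cpt unfolding compact_op_def .
    show ?thesis using mp[OF spec[OF A, of "\<lambda>k. z (s k)"] hz] .
  qed
  then obtain s2 b where s2: "strict_mono s2" "b \<in> l2"
      "(\<lambda>k. l2norm (MH \<alpha> (z (s (s2 k))) - b)) \<longlonglongrightarrow> 0"
    by auto
  define w where "w k = z (s (s2 k))" for k
  have sm: "strict_mono (s \<circ> s2)" by (rule strict_mono_o[OF s s2(1)])
  have wz: "\<And>k. w k \<in> l2" "\<And>k. l2norm (w k) \<le> 1" unfolding w_def using z by auto
  have wpw: "(\<lambda>k. w k n) \<longlonglongrightarrow> 0" if "n \<ge> 1" for n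
  proof -
    have "((\<lambda>k. z k n) \<circ> (s \<circ> s2)) \<longlonglongrightarrow> 0" by (rule LIMSEQ_subseq_LIMSEQ[OF pw[OF that] sm])
    thus ?thesis unfolding w_def o_def .
  qed
  have b0: "b m = 0" if m: "m \<ge> 1" for m
  proof -
    have c0: "(\<lambda>k. MH \<alpha> (w k) m) \<longlonglongrightarrow> 0" by (rule coord_null[OF wz wpw m])
    have "(\<lambda>k. MH \<alpha> (w k) m - b m) \<longlonglongrightarrow> 0"
    proof (rule Lim_null_comparison)
      show "eventually (\<lambda>k. norm (MH \<alpha> (w k) m - b m) \<le> l2norm (MH \<alpha> (w k) - b)) sequentially"
      proof (rule always_eventually, rule allI)
        fix k
        have "(\<lambda>n. MH \<alpha> (w k) n - b n) \<in> l2" by (rule l2_diff(1)[OF MH_l2(1)[OF wz(1)] s2(2)])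
        hence "cmod ((\<lambda>n. MH \<alpha> (w k) n - b n) m) \<le> l2norm (\<lambda>n. MH \<alpha> (w k) n - b n)"
          by (rule coord_le_l2norm[OF _ m])
        thus "norm (MH \<alpha> (w k) m - b m) \<le> l2norm (MH \<alpha> (w k) - b)" by (simp add: fun_diff_def)
      qed
      show "(\<lambda>k. l2norm (MH \<alpha> (w k) - b)) \<longlonglongrightarrow> 0" using s2(3) unfolding w_def .
    qed
    moreover have "(\<lambda>k. MH \<alpha> (w k) m - b m) \<longlonglongrightarrow> 0 - b m" by (intro tendsto_diff c0 tendsto_const)
    ultimately have "0 - b m = 0" using LIMSEQ_unique by blast
    thus ?thesis by simp
  qed
  have "l2norm (MH \<alpha> (w k) - b) = l2norm (MH \<alpha> (w k))" for k
    by (rule l2norm_cong) (simp add: b0)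
  hence "(\<lambda>k. l2norm (MH \<alpha> (w k))) \<longlonglongrightarrow> 0" using s2(3) unfolding w_def by simp
  hence "eventually (\<lambda>k. l2norm (MH \<alpha> (w k)) < \<epsilon>) sequentially" using e by (intro order_tendstoD) auto
  then obtain k where "l2norm (MH \<alpha> (w k)) < \<epsilon>" unfolding eventually_sequentially by blast
  moreover have "\<epsilon> \<le> l2norm (MH \<alpha> (w k))" unfolding w_def using ge[of "s2 k"] .
  ultimately show False by linarith
qed

lemma compact_null:
  fixes z :: "nat \<Rightarrow> nat \<Rightarrow> complex"
  assumes cpt: "compact_op (MH \<alpha>)"
    and z: "\<And>k. z k \<in> l2" "\<And>k. l2norm (z k) \<le> B"
    and pw: "\<And>n. n \<ge> 1 \<Longrightarrow> (\<lambda>k. z k n) \<longlonglongrightarrow> 0"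
  shows "(\<lambda>k. l2norm (MH \<alpha> (z k))) \<longlonglongrightarrow> 0"
proof -
  have B0: "0 \<le> B" using z(2)[of 0] l2norm_nonneg[of "z 0"] by linarith
  define c where "c = 1 / (B + 1)"
  have c0: "0 < c" unfolding c_def using B0 by simp
  define z' where "z' k n = of_real c * z k n" for k n
  have z'1: "z' k \<in> l2" "l2norm (z' k) \<le> c * l2norm (z k)" for k
    using l2_dom[OF z(1), of "z' k" c] c0 unfolding z'_def by (auto simp: norm_mult)
  have z'2: "l2norm (z' k) \<le> 1" for k
  proof -
    have "c * l2norm (z k) \<le> c * B" using z(2)[of k] c0 by (intro mult_left_mono) auto
    also have "\<dots> \<le> 1" unfolding c_def using B0 by (simp add: field_simps)
    finally show ?thesis using z'1(2)[of k] by linarith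
  qed
  have z'pw: "(\<lambda>k. z' k n) \<longlonglongrightarrow> 0" if "n \<ge> 1" for n
  proof -
    have "(\<lambda>k. z' k n) \<longlonglongrightarrow> of_real c * 0" unfolding z'_def by (intro tendsto_mult tendsto_const pw that)
    thus ?thesis by simp
  qed
  have lim: "(\<lambda>k. l2norm (MH \<alpha> (z' k))) \<longlonglongrightarrow> 0"
    by (rule compact_null1[OF cpt z'1(1) z'2 z'pw])
  have eq: "l2norm (MH \<alpha> (z' k)) = c * l2norm (MH \<alpha> (z k))" for k
  proof -
    have "l2norm (MH \<alpha> (z' k)) = l2norm (\<lambda>m. of_real c * MH \<alpha> (z k) m)"
      unfolding z'_def by (rule l2norm_cong) (rule MH_scale)
    also have "\<dots> = c * l2norm (MH \<alpha> (z k))" using c0 by (simp add: l2norm_scale)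
    finally show ?thesis .
  qed
  have "(\<lambda>k. (B + 1) * l2norm (MH \<alpha> (z' k))) \<longlonglongrightarrow> (B + 1) * 0"
    by (intro tendsto_mult tendsto_const lim)
  moreover have "(B + 1) * l2norm (MH \<alpha> (z' k)) = l2norm (MH \<alpha> (z k))" for k
    unfolding eq c_def using B0 by simp
  ultimately show ?thesis by simp
qed

end

lemma Dr_apply: "Dr r f n = complex_of_real (r ^ weight n) * f n"
  by (simp add: Dr_def)

context mh
begin

lemma lim_imp_compact:
  assumes lim: "((\<lambda>r. op_norm (\<lambda>a. MH (Dr r \<alpha>) a - MH \<alpha> a)) \<longlongrightarrow> 0) (at_left 1)"
  shows "compact_op (MH \<alpha>)"
  unfolding compact_op_def
proof (intro allI impI)
  fix x :: "nat \<Rightarrow> nat \<Rightarrow> complex"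
  assume hx: "\<forall>k. x k \<in> l2 \<and> l2norm (x k) \<le> 1"
  have x1: "\<And>k. x k \<in> l2" and x2: "\<And>k. l2norm (x k) \<le> 1" using hx by auto
  obtain s l where s: "strict_mono s" "l \<in> l2" "l2norm l \<le> 1" "\<And>n. n \<ge> 1 \<Longrightarrow> (\<lambda>k. x (s k) n) \<longlonglongrightarrow> l n"
    using weak_limit[of x, OF x1 x2] by blast
  define b where "b = MH \<alpha> l"
  have b: "b \<in> l2" unfolding b_def by (rule MH_l2(1)[OF s(2)])
  define z where "z k = (\<lambda>n. x (s k) n - l n)" for k
  have z1: "z k \<in> l2" for k unfolding z_def by (rule l2_diff(1)[OF x1 s(2)])
  have z2: "l2norm (z k) \<le> 2" for k
    using l2_diff(2)[OF x1[of "s k"] s(2)] x2[of "s k"] s(3) unfolding z_def by linarith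
  have zpw: "(\<lambda>k. z k n) \<longlonglongrightarrow> 0" if "n \<ge> 1" for n
  proof -
    have "(\<lambda>k. x (s k) n - l n) \<longlonglongrightarrow> l n - l n" by (intro tendsto_diff s(4) that tendsto_const)
    thus ?thesis unfolding z_def by simp
  qed
  have eqz: "l2norm (MH \<alpha> (x (s k)) - b) = l2norm (MH \<alpha> (z k))" for k
    unfolding z_def b_def by (rule l2norm_cong) (simp add: MH_diff[OF x1 s(2)])
  have "(\<lambda>k. l2norm (MH \<alpha> (z k))) \<longlonglongrightarrow> 0"
  proof (rule tendsto_iff[THEN iffD2], intro allI impI)
    fix \<epsilon> :: real assume e: "\<epsilon> > 0"
    have ev1: "eventually (\<lambda>r. op_norm (\<lambda>a. MH (Dr r \<alpha>) a - MH \<alpha> a) < \<epsilon> / 4) (at_left 1)"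
      using lim e by (intro order_tendstoD) auto
    have ev2: "eventually (\<lambda>r. r \<in> {0<..<1}) (at_left (1::real))" by (rule eventually_at_left_real) simp
    have nb: "at_left (1::real) \<noteq> bot" using trivial_limit_at_left_real[of "1::real"] by simp
    obtain r where r: "op_norm (\<lambda>a. MH (Dr r \<alpha>) a - MH \<alpha> a) < \<epsilon> / 4" "r \<in> {0<..<1}"
      using eventually_happens'[OF nb eventually_conj[OF ev1 ev2]] by blast
    have r0: "0 \<le> r" "r \<le> 1" "r < 1" using r(2) by auto
    define T where "T = (\<lambda>a. MH (Dr r \<alpha>) a - MH \<alpha> a)"
    have Ta: "T a = MH (Dr r \<alpha>) a - MH \<alpha> a" for a by (simp add: T_def)
    have Tb: "\<And>a. a \<in> l2 \<Longrightarrow> l2norm a \<le> 1 \<Longrightarrow> l2norm (T a) \<le> 2 * C"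
      unfolding Ta by (rule Tr_bound1[OF r0(1,2)])
    have opT: "op_norm T < \<epsilon> / 4" using r(1) unfolding T_def .
    have Tz: "l2norm (T (z k)) \<le> \<epsilon> / 2" for k
    proof -
      define h where "h = (\<lambda>n. of_real (1/2) * z k n)"
      have h: "h \<in> l2" "l2norm h \<le> 1/2 * l2norm (z k)"
        unfolding h_def using l2_dom[OF z1[of k], of "\<lambda>n. of_real (1/2) * z k n" "1/2"]
        by (auto simp: norm_mult)
      have h1: "l2norm h \<le> 1" using h(2) z2[of k] by linarith
      have "l2norm (T h) \<le> op_norm T" by (rule opn_ge[OF Tb h(1) h1])
      moreover have "l2norm (T h) = 1/2 * l2norm (T (z k))"
      proof -
        have "l2norm (T h) = l2norm (\<lambda>m. of_real (1/2) * T (z k) m)"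
          by (rule l2norm_cong) (simp only: Ta fun_diff_def h_def MH_scale_gen right_diff_distrib)
        also have "\<dots> = 1/2 * l2norm (T (z k))" using l2norm_scale[of "1/2" "T (z k)"] by simp
        finally show ?thesis .
      qed
      ultimately show ?thesis using opT by linarith
    qed
    have Dz: "(\<lambda>k. l2norm (Dr r (z k))) \<longlonglongrightarrow> 0" by (rule Dr_null[OF r0(1,3) z1 z2 zpw])
    hence "(\<lambda>k. C * l2norm (Dr r (z k))) \<longlonglongrightarrow> C * 0" by (intro tendsto_mult tendsto_const)
    hence "eventually (\<lambda>k. C * l2norm (Dr r (z k)) < \<epsilon> / 2) sequentially"
      using e by (intro order_tendstoD) auto
    thus "eventually (\<lambda>k. dist (l2norm (MH \<alpha> (z k))) 0 < \<epsilon>) sequentially"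
    proof eventually_elim
      case (elim k)
      define u where "u = Dr r (MH \<alpha> (Dr r (z k)))"
      have d: "Dr r (z k) \<in> l2" by (rule Dr_l2(1)[OF z1 r0(1,2)])
      have m: "MH \<alpha> (Dr r (z k)) \<in> l2" "l2norm (MH \<alpha> (Dr r (z k))) \<le> C * l2norm (Dr r (z k))"
        using MH_l2[OF d] by auto
      have u1: "u \<in> l2" unfolding u_def by (rule Dr_l2(1)[OF m(1) r0(1,2)])
      have u2: "l2norm u \<le> C * l2norm (Dr r (z k))"
        unfolding u_def using Dr_l2(2)[OF m(1) r0(1,2)] m(2) by linarith
      have Tl2: "T (z k) \<in> l2" unfolding Ta by (rule Tr_l2(1)[OF z1 r0(1,2)])
      have "l2norm (MH \<alpha> (z k)) = l2norm (\<lambda>m. u m - T (z k) m)"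
        by (rule l2norm_cong) (simp add: u_def Ta MH_Dr)
      also have "\<dots> \<le> l2norm u + l2norm (T (z k))" by (rule l2_diff(2)[OF u1 Tl2])
      also have "\<dots> < \<epsilon>" using u2 elim Tz[of k] by linarith
      finally have "l2norm (MH \<alpha> (z k)) < \<epsilon>" .
      thus ?case using l2norm_nonneg[of "MH \<alpha> (z k)"] by (simp add: dist_real_def)
    qed
  qed
  hence lim2: "(\<lambda>k. l2norm (MH \<alpha> (x (s k)) - b)) \<longlonglongrightarrow> 0" unfolding eqz .
  show "\<exists>s b. strict_mono s \<and> b \<in> l2 \<and> (\<lambda>k. l2norm (MH \<alpha> (x (s k)) - b)) \<longlonglongrightarrow> 0"
    by (rule exI[of _ s], rule exI[of _ b], intro conjI s(1) b lim2)
qed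

end

context mh
begin

lemma compact_imp_lim:
  assumes cpt: "compact_op (MH \<alpha>)"
  shows "((\<lambda>r. op_norm (\<lambda>a. MH (Dr r \<alpha>) a - MH \<alpha> a)) \<longlongrightarrow> 0) (at_left 1)"
proof (rule tendsto_at_left_sequentially[of 0])
  show "(0::real) < 1" by simp
  fix S :: "nat \<Rightarrow> real"
  assume S: "\<And>n. S n < 1" "\<And>n. 0 < S n" "incseq S" "S \<longlonglongrightarrow> 1"
  define T where "T r = (\<lambda>a. MH (Dr r \<alpha>) a - MH \<alpha> a)" for r
  have Ta: "T r a = MH (Dr r \<alpha>) a - MH \<alpha> a" for r a by (simp add: T_def)
  have Tb: "\<And>a. a \<in> l2 \<Longrightarrow> l2norm a \<le> 1 \<Longrightarrow> l2norm (T (S n) a) \<le> 2 * C" for n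
    unfolding Ta by (rule Tr_bound1) (use S(1,2)[of n] in auto)
  have "(\<lambda>n. op_norm (T (S n))) \<longlonglongrightarrow> 0"
  proof (rule tendsto0_by_contra)
    show "\<And>k. 0 \<le> op_norm (T (S k))" by (rule opn_nonneg[OF Tb])
    fix \<epsilon> :: real and s :: "nat \<Rightarrow> nat"
    assume e: "\<epsilon> > 0" and s: "strict_mono s" and ge: "\<And>j. \<epsilon> \<le> op_norm (T (S (s j)))"
    have "\<forall>j. \<exists>a. a \<in> l2 \<and> l2norm a \<le> 1 \<and> \<epsilon> / 2 < l2norm (T (S (s j)) a)"
    proof
      fix j
      have "\<epsilon> / 2 < op_norm (T (S (s j)))" using ge[of j] e by linarith
      thus "\<exists>a. a \<in> l2 \<and> l2norm a \<le> 1 \<and> \<epsilon> / 2 < l2norm (T (S (s j)) a)" by (rule opn_gt)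
    qed
    then obtain a where a: "\<forall>j. a j \<in> l2 \<and> l2norm (a j) \<le> 1 \<and> \<epsilon> / 2 < l2norm (T (S (s j)) (a j))"
      using choice[of "\<lambda>j a. a \<in> l2 \<and> l2norm a \<le> 1 \<and> \<epsilon> / 2 < l2norm (T (S (s j)) a)"] by blast
    have a1: "\<And>j. a j \<in> l2" and a2: "\<And>j. l2norm (a j) \<le> 1"
      and a3: "\<And>j. \<epsilon> / 2 < l2norm (T (S (s j)) (a j))" using a by auto
    obtain s2 l where s2: "strict_mono s2" "l \<in> l2" "l2norm l \<le> 1"
        "\<And>n. n \<ge> 1 \<Longrightarrow> (\<lambda>k. a (s2 k) n) \<longlonglongrightarrow> l n"
      using weak_limit[of a, OF a1 a2] by blast
    define \<rho> where "\<rho> = (\<lambda>k. S (s (s2 k)))"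
    define w where "w = (\<lambda>k. a (s2 k))"
    have rho: "\<And>k. 0 \<le> \<rho> k" "\<And>k. \<rho> k \<le> 1" "\<And>k. \<rho> k < 1"
      unfolding \<rho>_def using S(1,2) by (auto intro: less_imp_le)
    have rholim: "\<rho> \<longlonglongrightarrow> 1"
    proof -
      have "(S \<circ> (s \<circ> s2)) \<longlonglongrightarrow> 1" by (rule LIMSEQ_subseq_LIMSEQ[OF S(4) strict_mono_o[OF s s2(1)]])
      thus ?thesis unfolding \<rho>_def o_def .
    qed
    define b where "b = MH \<alpha> l"
    have b: "b \<in> l2" unfolding b_def by (rule MH_l2(1)[OF s2(2)])
    have w1: "w k \<in> l2" "l2norm (w k) \<le> 1" for k unfolding w_def using a1 a2 by auto
    define z where "z k = (\<lambda>n. w k n - l n)" for k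
    have z1: "z k \<in> l2" for k unfolding z_def by (rule l2_diff(1)[OF w1(1) s2(2)])
    have z2: "l2norm (z k) \<le> 2" for k
      using l2_diff(2)[OF w1(1)[of k] s2(2)] w1(2)[of k] s2(3) unfolding z_def by linarith
    have zpw: "(\<lambda>k. z k n) \<longlonglongrightarrow> 0" if "n \<ge> 1" for n
    proof -
      have "(\<lambda>k. w k n - l n) \<longlonglongrightarrow> l n - l n"
        unfolding w_def by (intro tendsto_diff s2(4) that tendsto_const)
      thus ?thesis unfolding z_def by simp
    qed
    define y where "y k = Dr (\<rho> k) (z k)" for k
    have y1: "y k \<in> l2" for k unfolding y_def by (rule Dr_l2(1)[OF z1 rho(1,2)])
    have y2: "l2norm (y k) \<le> 2" for k
      using Dr_l2(2)[OF z1[of k] rho(1,2)[of k]] z2[of k] unfolding y_def by linarith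
    have ypw: "(\<lambda>k. y k n) \<longlonglongrightarrow> 0" if "n \<ge> 1" for n
    proof (rule Lim_null_comparison)
      show "eventually (\<lambda>k. norm (y k n) \<le> cmod (z k n)) sequentially"
        unfolding y_def by (rule always_eventually, rule allI, rule Dr_le[OF rho(1,2)])
      show "(\<lambda>k. cmod (z k n)) \<longlonglongrightarrow> 0" by (rule tendsto_norm_zero[OF zpw[OF that]])
    qed
    have L1: "(\<lambda>k. l2norm (MH \<alpha> (y k))) \<longlonglongrightarrow> 0" by (rule compact_null[OF cpt y1 y2 ypw])
    have L2: "(\<lambda>k. l2norm (MH \<alpha> (z k))) \<longlonglongrightarrow> 0" by (rule compact_null[OF cpt z1 z2 zpw])
    have L3: "(\<lambda>k. l2norm (\<lambda>n. Dr (\<rho> k) l n - l n)) \<longlonglongrightarrow> 0" by (rule Dr_conv[OF s2(2) rho(1,2) rholim])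
    have L4: "(\<lambda>k. l2norm (\<lambda>n. Dr (\<rho> k) b n - b n)) \<longlonglongrightarrow> 0" by (rule Dr_conv[OF b rho(1,2) rholim])
    define g where "g = (\<lambda>k. l2norm (MH \<alpha> (y k)) + l2norm (MH \<alpha> (z k))
        + C * l2norm (\<lambda>n. Dr (\<rho> k) l n - l n) + l2norm (\<lambda>n. Dr (\<rho> k) b n - b n))"
    have "g \<longlonglongrightarrow> 0 + 0 + C * 0 + 0" unfolding g_def
      by (intro tendsto_add tendsto_mult tendsto_const L1 L2 L3 L4)
    hence glim: "g \<longlonglongrightarrow> 0" by simp
    have gb: "l2norm (T (\<rho> k) (w k)) \<le> g k" for k
    proof -
      define r where "r = \<rho> k"
      have r: "0 \<le> r" "r \<le> 1" unfolding r_def using rho by auto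
      have dw: "Dr r (w k) \<in> l2" by (rule Dr_l2(1)[OF w1(1) r])
      have dl: "Dr r l \<in> l2" by (rule Dr_l2(1)[OF s2(2) r])
      have dll: "(\<lambda>n. Dr r l n - l n) \<in> l2" "l2norm (\<lambda>n. Dr r l n - l n) \<le> l2norm l"
        using Dr_diff_l2[OF s2(2) r] by auto
      define p1 where "p1 = Dr r (MH \<alpha> (y k))"
      define p2 where "p2 = MH \<alpha> (z k)"
      define p3 where "p3 = Dr r (MH \<alpha> (\<lambda>n. Dr r l n - l n))"
      define p4 where "p4 = (\<lambda>n. Dr r b n - b n)"
      have yk: "y k = (\<lambda>n. Dr r (w k) n - Dr r l n)"
        unfolding y_def z_def r_def by (rule ext) (simp add: Dr_apply right_diff_distrib)
      have ident: "T r (w k) m = ((p1 m - p2 m) + p3 m) + p4 m" if m: "m \<ge> 1" for m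
      proof -
        have e1: "MH \<alpha> (y k) m = MH \<alpha> (Dr r (w k)) m - MH \<alpha> (Dr r l) m"
          unfolding yk by (rule MH_diff[OF dw dl m])
        have e2: "MH \<alpha> (z k) m = MH \<alpha> (w k) m - MH \<alpha> l m"
          unfolding z_def by (rule MH_diff[OF w1(1) s2(2) m])
        have e3: "MH \<alpha> (\<lambda>n. Dr r l n - l n) m = MH \<alpha> (Dr r l) m - MH \<alpha> l m"
          by (rule MH_diff[OF dl s2(2) m])
        have e0: "T r (w k) m = Dr r (MH \<alpha> (Dr r (w k))) m - MH \<alpha> (w k) m"
          unfolding Ta using MH_Dr[OF m] by simp
        show ?thesis unfolding e0 p1_def p2_def p3_def p4_def b_def
          unfolding Dr_apply[of r "MH \<alpha> (y k)"] Dr_apply[of r "MH \<alpha> (\<lambda>n. Dr r l n - l n)"]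
            Dr_apply[of r "MH \<alpha> l"] Dr_apply[of r "MH \<alpha> (Dr r (w k))"] e1 e2 e3
          by (simp add: algebra_simps)
      qed
      have MHy: "MH \<alpha> (y k) \<in> l2" by (rule MH_l2(1)[OF y1])
      have p1: "p1 \<in> l2" "l2norm p1 \<le> l2norm (MH \<alpha> (y k))"
        unfolding p1_def using Dr_l2[OF MHy r] by auto
      have p2: "p2 \<in> l2" unfolding p2_def by (rule MH_l2(1)[OF z1])
      have MHl: "MH \<alpha> (\<lambda>n. Dr r l n - l n) \<in> l2"
        "l2norm (MH \<alpha> (\<lambda>n. Dr r l n - l n)) \<le> C * l2norm (\<lambda>n. Dr r l n - l n)"
        using MH_l2[OF dll(1)] by auto
      have p3: "p3 \<in> l2" "l2norm p3 \<le> C * l2norm (\<lambda>n. Dr r l n - l n)"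
        unfolding p3_def using Dr_l2[OF MHl(1) r] MHl(2) by auto
      have p4: "p4 \<in> l2" unfolding p4_def using Dr_diff_l2[OF b r] by auto
      have q1: "(\<lambda>m. p1 m - p2 m) \<in> l2" "l2norm (\<lambda>m. p1 m - p2 m) \<le> l2norm p1 + l2norm p2"
        using l2_diff[OF p1(1) p2] by auto
      have q2: "(\<lambda>m. (p1 m - p2 m) + p3 m) \<in> l2"
          "l2norm (\<lambda>m. (p1 m - p2 m) + p3 m) \<le> l2norm (\<lambda>m. p1 m - p2 m) + l2norm p3"
        using l2_add[OF q1(1) p3(1)] by auto
      have q3: "l2norm (\<lambda>m. ((p1 m - p2 m) + p3 m) + p4 m) \<le> l2norm (\<lambda>m. (p1 m - p2 m) + p3 m) + l2norm p4"
        using l2_add[OF q2(1) p4] by auto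
      have "l2norm (T r (w k)) = l2norm (\<lambda>m. ((p1 m - p2 m) + p3 m) + p4 m)"
        by (rule l2norm_cong) (rule ident)
      also have "\<dots> \<le> g k"
        using q1(2) q2(2) q3 p1(2) p3(2) unfolding g_def p2_def p4_def r_def by linarith
      finally show ?thesis unfolding r_def .
    qed
    have "(\<lambda>k. l2norm (T (\<rho> k) (w k))) \<longlonglongrightarrow> 0"
    proof (rule Lim_null_comparison)
      show "eventually (\<lambda>k. norm (l2norm (T (\<rho> k) (w k))) \<le> g k) sequentially"
        using gb l2norm_nonneg by (intro always_eventually allI) simp
    qed (rule glim)
    hence "eventually (\<lambda>k. l2norm (T (\<rho> k) (w k)) < \<epsilon> / 2) sequentially"
      using e by (intro order_tendstoD) auto
    then obtain k where "l2norm (T (\<rho> k) (w k)) < \<epsilon> / 2" unfolding eventually_sequentially by blast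
    moreover have "\<epsilon> / 2 < l2norm (T (\<rho> k) (w k))" unfolding \<rho>_def w_def by (rule a3)
    ultimately show False by linarith
  qed
  thus "(\<lambda>n. op_norm (\<lambda>a. MH (Dr (S n) \<alpha>) a - MH \<alpha> a)) \<longlonglongrightarrow> 0" unfolding T_def .
qed

end

theorem proposition5:
  fixes \<alpha> :: "nat \<Rightarrow> complex"
  assumes "MH_bounded \<alpha>"
  shows "compact_op (MH \<alpha>) \<longleftrightarrow>
         ((\<lambda>r. op_norm (\<lambda>a. MH (Dr r \<alpha>) a - MH \<alpha> a)) \<longlongrightarrow> 0) (at_left 1)"
proof -
  obtain C where C: "\<And>a b. fin_supp a \<Longrightarrow> fin_supp b \<Longrightarrow> cmod (MH_form \<alpha> a b) \<le> C * l2norm a * l2norm b"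
    using assms unfolding MH_bounded_def by blast
  interpret mh \<alpha> "max C 0"
  proof
    show "0 \<le> max C 0" by simp
    fix a b assume ab: "fin_supp a" "fin_supp b"
    have "C * l2norm a * l2norm b \<le> max C 0 * l2norm a * l2norm b"
      by (intro mult_right_mono l2norm_nonneg) simp
    thus "cmod (MH_form \<alpha> a b) \<le> max C 0 * l2norm a * l2norm b" using C[OF ab] by linarith
  qed
  show ?thesis using lim_imp_compact compact_imp_lim by blast
qed

end
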